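(* Let $n,m\ge1$ and let $S=\{a_1,\dots,a_n,b_1,\dots,b_m\}$ be the poset whose only strict relations are $a_i<b_j$ for all $i=1,\dots,n$, $j=1,\dots,m$. Then every stochastically monotone generator on $S$ is realizably monotone. *)

theory Defs
  imports Complex_Main
begin

definition is_generator :: "('a::finite \<Rightarrow> 'a \<Rightarrow> real) \<Rightarrow> bool" where
  "is_generator Q \<longleftrightarrow> (\<forall>x y. x \<noteq> y \<longrightarrow> 0 \<le> Q x y) \<and> (\<forall>x. (\<Sum>y\<in>UNIV. Q x y) = 0)"

definition up_set :: "('a \<Rightarrow> 'a \<Rightarrow> bool) \<Rightarrow> 'a set \<Rightarrow> bool" where
  "up_set le U \<longleftrightarrow> (\<forall>x y. x \<in> U \<longrightarrow> le x y \<longrightarrow> y \<in> U)"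

definition monotone_map :: "('a \<Rightarrow> 'a \<Rightarrow> bool) \<Rightarrow> ('a \<Rightarrow> 'a) \<Rightarrow> bool" where
  "monotone_map le f \<longleftrightarrow> (\<forall>x y. le x y \<longrightarrow> le (f x) (f y))"

text \<open>Stochastic monotonicity of a generator (Massey's criterion): for all x \<le> y
and every up-set U containing both or neither of x, y, Q(x,U) \<le> Q(y,U).\<close>

definition stoch_monotone_generator ::
  "('a::finite \<Rightarrow> 'a \<Rightarrow> bool) \<Rightarrow> ('a \<Rightarrow> 'a \<Rightarrow> real) \<Rightarrow> bool" where
  "stoch_monotone_generator le Q \<longleftrightarrow> is_generator Q \<and>
     (\<forall>x y U. le x y \<longrightarrow> up_set le U \<longrightarrow> (x \<in> U \<longleftrightarrow> y \<in> U) \<longrightarrow>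
        (\<Sum>z\<in>U. Q x z) \<le> (\<Sum>z\<in>U. Q y z))"

definition realizably_monotone_generator ::
  "('a::finite \<Rightarrow> 'a \<Rightarrow> bool) \<Rightarrow> ('a \<Rightarrow> 'a \<Rightarrow> real) \<Rightarrow> bool" where
  "realizably_monotone_generator le Q \<longleftrightarrow> is_generator Q \<and>
     (\<exists>rate :: ('a \<Rightarrow> 'a) \<Rightarrow> real. (\<forall>f. 0 \<le> rate f) \<and>
        (\<forall>x y. x \<noteq> y \<longrightarrow>
           Q x y = (\<Sum>f\<in>{f. monotone_map le f \<and> f x = y}. rate f)))"

text \<open>The bipartite poset a_1..a_n (Inl) below b_1..b_m (Inr): only strict
relations are a_i < b_j.\<close>

fun bip_le :: "('a + 'b) \<Rightarrow> ('a + 'b) \<Rightarrow> bool" where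
  "bip_le (Inl i) (Inl i') \<longleftrightarrow> i = i'"
| "bip_le (Inr j) (Inr j') \<longleftrightarrow> j = j'"
| "bip_le (Inl i) (Inr j) \<longleftrightarrow> True"
| "bip_le (Inr j) (Inl i) \<longleftrightarrow> False"

end

theory Submission
  imports Defs
begin

definition rep :: "('s \<Rightarrow> 's \<Rightarrow> bool) \<Rightarrow> ('s::finite \<Rightarrow> 's \<Rightarrow> real) \<Rightarrow> bool" where
  "rep le R \<longleftrightarrow> (\<exists>rate::('s\<Rightarrow>'s)\<Rightarrow>real. (\<forall>f. 0 \<le> rate f) \<and>
     (\<forall>x y. x \<noteq> y \<longrightarrow> R x y = (\<Sum>f\<in>{f. monotone_map le f \<and> f x = y}. rate f)))"

lemma rep_add:
  assumes "rep le R1" "rep le R2"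
  shows "rep le (\<lambda>x y. R1 x y + R2 x y)"
proof -
  obtain r1 where r1: "\<forall>f. 0 \<le> r1 f" "\<forall>x y. x \<noteq> y \<longrightarrow> R1 x y = (\<Sum>f\<in>{f. monotone_map le f \<and> f x = y}. r1 f)"
    using assms(1) unfolding rep_def by blast
  obtain r2 where r2: "\<forall>f. 0 \<le> r2 f" "\<forall>x y. x \<noteq> y \<longrightarrow> R2 x y = (\<Sum>f\<in>{f. monotone_map le f \<and> f x = y}. r2 f)"
    using assms(2) unfolding rep_def by blast
  show ?thesis unfolding rep_def
    by (rule exI[of _ "\<lambda>f. r1 f + r2 f"]) (simp add: r1 r2 sum.distrib add_nonneg_nonneg)
qed

lemma rep_scale:
  assumes "rep le R" "0 \<le> c"
  shows "rep le (\<lambda>x y. c * R x y)"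
proof -
  obtain r1 where r1: "\<forall>f. 0 \<le> r1 f" "\<forall>x y. x \<noteq> y \<longrightarrow> R x y = (\<Sum>f\<in>{f. monotone_map le f \<and> f x = y}. r1 f)"
    using assms(1) unfolding rep_def by blast
  show ?thesis unfolding rep_def
    by (rule exI[of _ "\<lambda>f. c * r1 f"]) (simp add: r1 sum_distrib_left assms(2))
qed

lemma rep_single:
  assumes "monotone_map le (g::'s::finite \<Rightarrow> 's)"
  shows "rep le (\<lambda>x y. if g x = y then 1 else 0)"
  unfolding rep_def
proof (rule exI[of _ "\<lambda>f. if f = g then 1 else 0"], intro conjI allI impI)
  fix x y :: 's
  show "(if g x = y then 1 else 0) = (\<Sum>f\<in>{f. monotone_map le f \<and> f x = y}. (if f = g then 1 else 0::real))"
    using assms by (simp add: sum.delta)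
qed simp

lemma rep_zero: "rep le (\<lambda>x y. 0::real)"
  unfolding rep_def by (rule exI[of _ "\<lambda>f. 0"]) simp

lemma rep_cong:
  assumes "rep le R" "\<And>x y. x \<noteq> y \<Longrightarrow> R x y = R' x y"
  shows "rep le R'"
  using assms unfolding rep_def by metis

lemma layer:
  fixes z :: "'s::finite"
  assumes mono: "\<And>w. ok w \<Longrightarrow> monotone_map le (\<lambda>x. if x \<noteq> z \<and> 0 < w x then z else x)"
    and pres: "\<And>w m. ok w \<Longrightarrow> (\<And>x. x \<noteq> z \<Longrightarrow> 0 < w x \<Longrightarrow> m \<le> w x) \<Longrightarrow>
                 ok (\<lambda>x. if x \<noteq> z \<and> 0 < w x then w x - m else w x)"
    and nonneg: "\<And>w x. ok w \<Longrightarrow> 0 \<le> w x"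
    and okw: "ok w"
  shows "rep le (\<lambda>x y. if y = z then w x else 0)"
proof -
  have "\<forall>w. card {x. x \<noteq> z \<and> 0 < w x} = n \<longrightarrow> ok w \<longrightarrow> rep le (\<lambda>x y. if y = z then w x else 0)" for n
  proof (induction n rule: less_induct)
    case (less n)
    show ?case
    proof (intro allI impI)
      fix w assume c: "card {x. x \<noteq> z \<and> 0 < w x} = n" and ok: "ok w"
      define S where "S = {x. x \<noteq> z \<and> 0 < w x}"
      show "rep le (\<lambda>x y. if y = z then w x else 0)"
      proof (cases "S = {}")
        case True
        show ?thesis
        proof (rule rep_cong[OF rep_zero])
          fix x y :: 's assume "x \<noteq> y"
          show "0 = (if y = z then w x else 0)"
            using True nonneg[OF ok, of x] \<open>x \<noteq> y\<close> unfolding S_def by auto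
        qed
      next
        case False
        have fin: "finite S" by simp
        define m where "m = Min (w ` S)"
        have "m \<in> w ` S" unfolding m_def using False fin by (intro Min_in) auto
        then obtain x0 where x0: "x0 \<in> S" "w x0 = m" by auto
        have mle: "\<And>x. x \<in> S \<Longrightarrow> m \<le> w x" unfolding m_def using fin by auto
        have mpos: "0 < m" using x0 unfolding S_def by auto
        define w' where "w' = (\<lambda>x. if x \<noteq> z \<and> 0 < w x then w x - m else w x)"
        have ok': "ok w'" unfolding w'_def by (rule pres[OF ok]) (use mle in \<open>auto simp: S_def\<close>)
        have sub: "{x. x \<noteq> z \<and> 0 < w' x} \<subset> S"
        proof -
          have "{x. x \<noteq> z \<and> 0 < w' x} \<subseteq> S" unfolding S_def w'_def by auto
          moreover have "x0 \<notin> {x. x \<noteq> z \<and> 0 < w' x}" using x0 unfolding w'_def S_def by auto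
          ultimately show ?thesis using x0 by blast
        qed
        have lt: "card {x. x \<noteq> z \<and> 0 < w' x} < n"
          using psubset_card_mono[OF fin sub] c unfolding S_def by simp
        have r1: "rep le (\<lambda>x y. if y = z then w' x else 0)" using less lt ok' by blast
        define g where "g = (\<lambda>x. if x \<noteq> z \<and> 0 < w x then z else x)"
        have r2: "rep le (\<lambda>x y. m * (if g x = y then 1 else 0))"
          by (rule rep_scale[OF rep_single]) (use mono[OF ok] mpos in \<open>auto simp: g_def\<close>)
        show ?thesis
        proof (rule rep_cong[OF rep_add[OF r1 r2]])
          fix x y :: 's assume "x \<noteq> y"
          then show "(if y = z then w' x else 0) + m * (if g x = y then 1 else 0) = (if y = z then w x else 0)"
            unfolding w'_def g_def by auto
        qed
      qed
    qed
  qed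
  then show ?thesis using okw by blast
qed


lemma bip_refl[simp]: "bip_le x x"
  by (cases x) auto

lemma target_rep:
  fixes Q :: "('a::finite + 'b::finite) \<Rightarrow> ('a + 'b) \<Rightarrow> real"
  assumes sm: "stoch_monotone_generator bip_le Q"
  shows "rep bip_le (\<lambda>x y. if y = z then (if x = z then 0 else Q x z) else 0)"
proof -
  have gen: "is_generator Q" using sm unfolding stoch_monotone_generator_def by blast
  have off: "\<And>x y. x \<noteq> y \<Longrightarrow> 0 \<le> Q x y" using gen unfolding is_generator_def by blast
  have mon: "\<And>x y U. bip_le x y \<Longrightarrow> up_set bip_le U \<Longrightarrow> (x \<in> U \<longleftrightarrow> y \<in> U) \<Longrightarrow>
        (\<Sum>z\<in>U. Q x z) \<le> (\<Sum>z\<in>U. Q y z)"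
    using sm unfolding stoch_monotone_generator_def by blast
  define v where "v = (\<lambda>x. if x = z then 0 else Q x z)"
  show ?thesis
  proof (cases z)
    case (Inr b0)
    define ok where "ok = (\<lambda>w::('a+'b) \<Rightarrow> real. (\<forall>x. 0 \<le> w x) \<and> (\<forall>a b. Inr b \<noteq> z \<longrightarrow> w (Inl a) \<le> w (Inr b)))"
    have C1: "Q (Inl a) (Inr b0) \<le> Q (Inr b) (Inr b0)" if "b \<noteq> b0" for a b
    proof -
      have "up_set bip_le {Inr b0}" unfolding up_set_def
        by (auto elim: bip_le.elims)
      from mon[OF _ this, of "Inl a" "Inr b"] that show ?thesis by simp
    qed
    have "ok v" unfolding ok_def v_def using off C1 Inr by auto
    have "rep bip_le (\<lambda>x y. if y = z then v x else 0)"
    proof (rule layer[of ok])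
      fix w assume okw: "ok w"
      show "monotone_map bip_le (\<lambda>x. if x \<noteq> z \<and> 0 < w x then z else x)"
        unfolding monotone_map_def
      proof (intro allI impI)
        fix x y :: "'a + 'b" assume "bip_le x y"
        then show "bip_le (if x \<noteq> z \<and> 0 < w x then z else x) (if y \<noteq> z \<and> 0 < w y then z else y)"
        proof -
          from \<open>bip_le x y\<close> have "x = y \<or> (\<exists>a b. x = Inl a \<and> y = Inr b)"
            by (cases x; cases y) auto
          then show ?thesis
          proof
            assume "x = y" then show ?thesis by simp
          next
            assume "\<exists>a b. x = Inl a \<and> y = Inr b"
            then obtain a b where ab: "x = Inl a" "y = Inr b" by blast
            have le: "Inr b \<noteq> z \<Longrightarrow> w (Inl a) \<le> w (Inr b)" using okw unfolding ok_def by blast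
            show ?thesis
            proof (cases "0 < w (Inl a)")
              case True
              then have "y = z \<or> (y \<noteq> z \<and> 0 < w y)" using le ab by force
              then show ?thesis using True ab Inr by auto
            next
              case False
              then show ?thesis using ab Inr by auto
            qed
          qed
        qed
      qed
    next
      fix w :: "'a+'b \<Rightarrow> real" and m assume okw: "ok w" and ml: "\<And>x. x \<noteq> z \<Longrightarrow> 0 < w x \<Longrightarrow> m \<le> w x"
      show "ok (\<lambda>x. if x \<noteq> z \<and> 0 < w x then w x - m else w x)"
        unfolding ok_def
      proof (intro conjI allI impI)
        fix x show "0 \<le> (if x \<noteq> z \<and> 0 < w x then w x - m else w x)"
          using okw ml[of x] unfolding ok_def by auto
      next
        fix a b show "Inr b \<noteq> z \<Longrightarrow> (if Inl a \<noteq> z \<and> 0 < w (Inl a) then w (Inl a) - m else w (Inl a))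
              \<le> (if Inr b \<noteq> z \<and> 0 < w (Inr b) then w (Inr b) - m else w (Inr b))"
        proof -
          assume nb: "Inr b \<noteq> z"
          have "w (Inl a) \<le> w (Inr b)" using okw nb unfolding ok_def by blast
          moreover have "0 \<le> w (Inr b)" "0 \<le> w (Inl a)" using okw unfolding ok_def by auto
          ultimately show ?thesis using ml[of "Inr b"] ml[of "Inl a"] Inr nb by auto
        qed
      qed
    next
      fix w x show "ok w \<Longrightarrow> 0 \<le> w x" unfolding ok_def by auto
    qed fact
    then show ?thesis unfolding v_def .
  next
    case (Inl a0)
    define ok where "ok = (\<lambda>w::('a+'b) \<Rightarrow> real. (\<forall>x. 0 \<le> w x) \<and> (\<forall>a b. Inl a \<noteq> z \<longrightarrow> w (Inr b) \<le> w (Inl a)))"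
    have C2: "Q (Inr b) (Inl a0) \<le> Q (Inl a) (Inl a0)" if "a \<noteq> a0" for a b
    proof -
      have up: "up_set bip_le (- {Inl a0})" unfolding up_set_def
        by (auto elim: bip_le.elims)
      have s: "(\<Sum>z\<in>UNIV. Q x z) = Q x (Inl a0) + (\<Sum>z\<in>- {Inl a0}. Q x z)" for x
        by (subst sum.remove[of UNIV "Inl a0"]) (auto simp: Compl_eq_Diff_UNIV)
      have "(\<Sum>z\<in>- {Inl a0}. Q (Inl a) z) \<le> (\<Sum>z\<in>- {Inl a0}. Q (Inr b) z)"
        using mon[OF _ up, of "Inl a" "Inr b"] that by simp
      moreover have z: "(\<Sum>z\<in>UNIV. Q x z) = 0" for x using gen unfolding is_generator_def by blast
      ultimately show ?thesis using s[of "Inl a"] s[of "Inr b"] z[of "Inl a"] z[of "Inr b"] by linarith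
    qed
    have "ok v" unfolding ok_def v_def using off C2 Inl by auto
    have "rep bip_le (\<lambda>x y. if y = z then v x else 0)"
    proof (rule layer[of ok])
      fix w assume okw: "ok w"
      show "monotone_map bip_le (\<lambda>x. if x \<noteq> z \<and> 0 < w x then z else x)"
        unfolding monotone_map_def
      proof (intro allI impI)
        fix x y :: "'a + 'b" assume "bip_le x y"
        then show "bip_le (if x \<noteq> z \<and> 0 < w x then z else x) (if y \<noteq> z \<and> 0 < w y then z else y)"
        proof -
          from \<open>bip_le x y\<close> have "x = y \<or> (\<exists>a b. x = Inl a \<and> y = Inr b)"
            by (cases x; cases y) auto
          then show ?thesis
          proof
            assume "x = y" then show ?thesis by simp
          next
            assume "\<exists>a b. x = Inl a \<and> y = Inr b"
            then obtain a b where ab: "x = Inl a" "y = Inr b" by blast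
            have le: "Inl a \<noteq> z \<Longrightarrow> w (Inr b) \<le> w (Inl a)" using okw unfolding ok_def by blast
            show ?thesis
            proof (cases "0 < w (Inr b)")
              case True
              then have "x = z \<or> (x \<noteq> z \<and> 0 < w x)" using le ab by force
              then show ?thesis using True ab Inl by auto
            next
              case False
              then show ?thesis using ab Inl by auto
            qed
          qed
        qed
      qed
    next
      fix w :: "'a+'b \<Rightarrow> real" and m assume okw: "ok w" and ml: "\<And>x. x \<noteq> z \<Longrightarrow> 0 < w x \<Longrightarrow> m \<le> w x"
      show "ok (\<lambda>x. if x \<noteq> z \<and> 0 < w x then w x - m else w x)"
        unfolding ok_def
      proof (intro conjI allI impI)
        fix x show "0 \<le> (if x \<noteq> z \<and> 0 < w x then w x - m else w x)"
          using okw ml[of x] unfolding ok_def by auto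
      next
        fix a b show "Inl a \<noteq> z \<Longrightarrow> (if Inr b \<noteq> z \<and> 0 < w (Inr b) then w (Inr b) - m else w (Inr b))
              \<le> (if Inl a \<noteq> z \<and> 0 < w (Inl a) then w (Inl a) - m else w (Inl a))"
        proof -
          assume na: "Inl a \<noteq> z"
          have "w (Inr b) \<le> w (Inl a)" using okw na unfolding ok_def by blast
          moreover have "0 \<le> w (Inr b)" "0 \<le> w (Inl a)" using okw unfolding ok_def by auto
          ultimately show ?thesis using ml[of "Inr b"] ml[of "Inl a"] Inl na by auto
        qed
      qed
    next
      fix w x show "ok w \<Longrightarrow> 0 \<le> w x" unfolding ok_def by auto
    qed fact
    then show ?thesis unfolding v_def .
  qed
qed

lemma rep_combine:
  fixes v :: "'s::finite \<Rightarrow> 's \<Rightarrow> real"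
  assumes "\<And>z. rep le (\<lambda>x y. if y = z then v z x else 0)"
  shows "\<exists>rate. (\<forall>f. 0 \<le> rate f) \<and> (\<forall>x y. x \<noteq> y \<longrightarrow> v y x = (\<Sum>f\<in>{f. monotone_map le f \<and> f x = y}. rate f))"
proof -
  let ?P = "\<lambda>z (r::('s\<Rightarrow>'s)\<Rightarrow>real). (\<forall>f. 0 \<le> r f) \<and> (\<forall>x y. x \<noteq> y \<longrightarrow> (if y = z then v z x else 0) = (\<Sum>f\<in>{f. monotone_map le f \<and> f x = y}. r f))"
  have "\<forall>z. \<exists>r. ?P z r"
  proof
    fix z show "\<exists>r. ?P z r" using assms[of z] unfolding rep_def .
  qed
  then obtain rf where rf: "\<forall>z. ?P z (rf z)" by (rule choice[THEN exE])
  show ?thesis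
  proof (intro exI[of _ "\<lambda>f. \<Sum>z\<in>UNIV. rf z f"] conjI allI impI)
    fix f show "0 \<le> (\<Sum>z\<in>UNIV. rf z f)" using rf by (simp add: sum_nonneg)
  next
    fix x y :: 's assume xy: "x \<noteq> y"
    have "(\<Sum>f\<in>{f. monotone_map le f \<and> f x = y}. \<Sum>z\<in>UNIV. rf z f)
        = (\<Sum>z\<in>UNIV. \<Sum>f\<in>{f. monotone_map le f \<and> f x = y}. rf z f)"
      by (rule sum.swap)
    also have "\<dots> = (\<Sum>z\<in>UNIV. (if y = z then v z x else 0))"
      proof (rule sum.cong[OF refl])
      fix z show "(\<Sum>f\<in>{f. monotone_map le f \<and> f x = y}. rf z f) = (if y = z then v z x else 0)"
        using rf[rule_format, of z, THEN conjunct2, rule_format, OF xy] by simp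
    qed
    also have "\<dots> = v y x" by simp
    finally show "v y x = (\<Sum>f\<in>{f. monotone_map le f \<and> f x = y}. \<Sum>z\<in>UNIV. rf z f)" by simp
  qed
qed

theorem mainTheorem12:
  fixes Q :: "('a::finite + 'b::finite) \<Rightarrow> ('a + 'b) \<Rightarrow> real"
  assumes "stoch_monotone_generator bip_le Q"
  shows "realizably_monotone_generator bip_le Q"
proof -
  have gen: "is_generator Q" using assms unfolding stoch_monotone_generator_def by blast
  define v where "v = (\<lambda>z x. if x = z then 0 else Q x z)"
  have "\<exists>rate. (\<forall>f. 0 \<le> rate f) \<and> (\<forall>x y. x \<noteq> y \<longrightarrow> v y x = (\<Sum>f\<in>{f. monotone_map bip_le f \<and> f x = y}. rate f))"
    by (rule rep_combine) (unfold v_def, rule target_rep[OF assms])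
  then obtain rate where r: "\<forall>f. 0 \<le> rate f" "\<forall>x y. x \<noteq> y \<longrightarrow> v y x = (\<Sum>f\<in>{f. monotone_map bip_le f \<and> f x = y}. rate f)"
    by blast
  show ?thesis unfolding realizably_monotone_generator_def
  proof (intro conjI gen exI[of _ rate] allI impI)
    fix f show "0 \<le> rate f" using r by blast
  next
    fix x y :: "'a + 'b" assume "x \<noteq> y"
    then show "Q x y = (\<Sum>f\<in>{f. monotone_map bip_le f \<and> f x = y}. rate f)"
      using r(2) unfolding v_def by auto
  qed
qed

end
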